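(* Consider cyclically non-backtracking walks of length $2k$ on the complete bipartite graph $K_{n,m}$ such that in the subgraph spanned by the walk, all vertices from $V_1$ have degree at most $d_1$ and all vertices from $V_2$ have degree at most $d_2$. Then the number of such walks with given parameters $\chi_1,\chi_2,f_1,f_2$ satisfying $\chi=\chi_1+\chi_2\geq1$ is at most $$(2k)^{3(\chi_1+\chi_2)+2}(d_1-1)^{f_2}(d_2-1)^{f_1}n^{k-\chi_1-f_1}m^{k-\chi_2-f_2}.$$ Moreover, for every such walk, $|f_1-f_2|\leq\chi+1$.
   Context: $K_{n,m}$ has vertex classes $V_1=[n]$, $V_2=[m]$. A cyclically non-backtracking walk of length $2k$ is a walk $(w_0,w_1,\dots,w_{2k})$ with $w_{2k}=w_0\in V_1$, written $(u_1,v_1,\dots,u_k,v_k,u_{k+1})$ with $u_i\in V_1$, $v_i\in V_2$, such that $u_{i+1}\neq u_i$ ($1\leq i\leq k$), $v_{i+1}\neq v_i$ ($1\leq i\leq k-1$), and $(u_1,v_1,u_2)\neq(u_{k+1},v_k,u_k)$. For $1\leq i\leq 2k$, step $i$ is free if $w_i$ did not previously occur in the walk; a coincidence if $w_i$ previously occurred but the edge $w_{i-1}w_i$ did not; forced if the edge $w_{i-1}w_i$ previously occurred. Let $\chi_1+1$ and $\chi_2$ be the numbers of coincidence steps ending at a vertex of $V_1$ and of $V_2$ respectively (so there are $\chi+1$ coincidences, $\chi=\chi_1+\chi_2$), and $f_1,f_2$ the numbers of forced steps ending at a vertex of $V_1$ and of $V_2$ respectively. *)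

theory Defs
  imports Complex_Main
begin

text \<open>Vertices of K_{n,m}: Inl u with u in {1..n} (class V1), Inr v with v in {1..m} (class V2).
A walk of length 2k is a list w = [w_0, ..., w_2k]; u_i = w!(2(i-1)), v_i = w!(2i-1).\<close>

definition cnb_walk :: "nat \<Rightarrow> nat \<Rightarrow> nat \<Rightarrow> (nat + nat) list \<Rightarrow> bool" where
  "cnb_walk n m k w \<longleftrightarrow>
     1 \<le> k \<and> length w = 2*k + 1 \<and>
     (\<forall>i\<le>k. \<exists>u\<in>{1..n}. w!(2*i) = Inl u) \<and>
     (\<forall>i<k. \<exists>v\<in>{1..m}. w!(2*i+1) = Inr v) \<and>
     w!(2*k) = w!0 \<and>
     (\<forall>i\<in>{1..k}. w!(2*i) \<noteq> w!(2*i-2)) \<and>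
     (\<forall>i\<in>{1..k-1}. w!(2*i+1) \<noteq> w!(2*i-1)) \<and>
     (w!0, w!1, w!2) \<noteq> (w!(2*k), w!(2*k-1), w!(2*k-2))"

definition edges_before :: "(nat + nat) list \<Rightarrow> nat \<Rightarrow> (nat + nat) set set" where
  "edges_before w i = {{w!(j-1), w!j} | j. 1 \<le> j \<and> j < i}"

definition walk_edges :: "(nat + nat) list \<Rightarrow> (nat + nat) set set" where
  "walk_edges w = edges_before w (length w)"

definition walk_deg :: "(nat + nat) list \<Rightarrow> (nat + nat) \<Rightarrow> nat" where
  "walk_deg w x = card {y. {x, y} \<in> walk_edges w}"

definition free_step :: "(nat + nat) list \<Rightarrow> nat \<Rightarrow> bool" where
  "free_step w i \<longleftrightarrow> w!i \<notin> set (take i w)"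

definition coinc_step :: "(nat + nat) list \<Rightarrow> nat \<Rightarrow> bool" where
  "coinc_step w i \<longleftrightarrow> w!i \<in> set (take i w) \<and> {w!(i-1), w!i} \<notin> edges_before w i"

definition forced_step :: "(nat + nat) list \<Rightarrow> nat \<Rightarrow> bool" where
  "forced_step w i \<longleftrightarrow> {w!(i-1), w!i} \<in> edges_before w i"

definition steps :: "(nat + nat) list \<Rightarrow> nat set" where
  "steps w = {1..length w - 1}"

definition chi1 :: "(nat + nat) list \<Rightarrow> int" where
  "chi1 w = int (card {i\<in>steps w. coinc_step w i \<and> isl (w!i)}) - 1"

definition chi2 :: "(nat + nat) list \<Rightarrow> nat" where
  "chi2 w = card {i\<in>steps w. coinc_step w i \<and> \<not> isl (w!i)}"

definition f1 :: "(nat + nat) list \<Rightarrow> nat" where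
  "f1 w = card {i\<in>steps w. forced_step w i \<and> isl (w!i)}"

definition f2 :: "(nat + nat) list \<Rightarrow> nat" where
  "f2 w = card {i\<in>steps w. forced_step w i \<and> \<not> isl (w!i)}"

definition deg_bounded :: "nat \<Rightarrow> nat \<Rightarrow> (nat + nat) list \<Rightarrow> bool" where
  "deg_bounded d1 d2 w \<longleftrightarrow>
     (\<forall>x\<in>set w. (isl x \<longrightarrow> walk_deg w x \<le> d1) \<and> (\<not> isl x \<longrightarrow> walk_deg w x \<le> d2))"

end

theory Submission
  imports Defs
begin


definition sg :: "nat \<Rightarrow> int" where "sg i = (if even i then 1 else -1)"

lemma card_filter_sum: "finite A \<Longrightarrow> card {x\<in>A. P x} = (\<Sum>x\<in>A. if P x then 1 else 0)"
  by (simp add: sum.inter_filter[symmetric])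

lemma tseq_balance:
  fixes T :: "nat \<Rightarrow> nat" and N :: nat
  assumes H0: "\<forall>i\<in>{1..N}. T i \<le> 2"
    and Ha: "T 1 \<noteq> 2"
    and Hb: "\<forall>i. 1 \<le> i \<and> i < N \<and> T i = 0 \<longrightarrow> T (Suc i) \<noteq> 2"
  shows "\<bar>\<Sum>i=1..N. if T i = 2 then sg i else 0\<bar> \<le> (\<Sum>i=1..N. if T i = 1 then 1 else 0 :: int)"
proof -
  define D where "D j = (\<Sum>i=1..j. if T i = 2 then sg i else 0)" for j
  define K where "K j = (\<Sum>i=1..j. if T i = 1 then 1 else 0 :: int)" for j
  have sgS: "sg (Suc j) = - sg j" for j by (simp add: sg_def)
  have "j \<le> N \<Longrightarrow> \<bar>D j\<bar> \<le> K j \<and> (1 \<le> j \<longrightarrow> T j = 1 \<longrightarrow> \<bar>D j\<bar> + 1 \<le> K j)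
     \<and> (1 \<le> j \<longrightarrow> T j = 2 \<longrightarrow> \<bar>D j - sg j\<bar> + 1 \<le> K j \<or> \<bar>D j\<bar> + 1 \<le> K j)" for j
  proof (induction j)
    case 0
    then show ?case by (simp add: D_def K_def)
  next
    case (Suc j)
    then have IH: "\<bar>D j\<bar> \<le> K j \<and> (1 \<le> j \<longrightarrow> T j = 1 \<longrightarrow> \<bar>D j\<bar> + 1 \<le> K j)
     \<and> (1 \<le> j \<longrightarrow> T j = 2 \<longrightarrow> \<bar>D j - sg j\<bar> + 1 \<le> K j \<or> \<bar>D j\<bar> + 1 \<le> K j)" by simp
    have DS: "D (Suc j) = D j + (if T (Suc j) = 2 then sg (Suc j) else 0)" by (simp add: D_def)
    have KS: "K (Suc j) = K j + (if T (Suc j) = 1 then 1 else 0)" by (simp add: K_def)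
    have sgv: "sg i = 1 \<or> sg i = -1" for i by (simp add: sg_def)
    have "T (Suc j) \<le> 2" using H0 Suc.prems by auto
    then consider "T (Suc j) = 0" | "T (Suc j) = 1" | "T (Suc j) = 2" by arith
    then show ?case
    proof cases
      case 1 then show ?thesis using IH DS KS by simp
    next
      case 2 then show ?thesis using IH DS KS by simp
    next
      case 3
      have j1: "1 \<le> j" using 3 Ha by (cases j) auto
      have "T j \<noteq> 0" using Hb j1 Suc.prems 3 by auto
      moreover have "T j \<le> 2" using H0 j1 Suc.prems by auto
      ultimately have "T j = 1 \<or> T j = 2" by auto
      then show ?thesis using IH DS KS 3 j1 sgS[of j] sgv[of j] by auto
    qed
  qed
  from this[of N] show ?thesis by (simp add: D_def K_def)
qed

lemma tseq_runs:
  fixes T :: "nat \<Rightarrow> nat" and N :: nat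
  assumes H0: "\<forall>i\<in>{1..N}. T i \<le> 2"
    and Ha: "T 1 \<noteq> 2"
    and Hb: "\<forall>i. 1 \<le> i \<and> i < N \<and> T i = 0 \<longrightarrow> T (Suc i) \<noteq> 2"
    and Hc: "T N \<noteq> 0" and N1: "1 \<le> N"
  shows "card {i\<in>{1..<N}. T i = 2 \<and> T (Suc i) \<noteq> 2} + 1 \<le> card {i\<in>{1..N}. T i = 1}"
proof -
  define R where "R j = (\<Sum>i=1..<j. if T i = 2 \<and> T (Suc i) \<noteq> 2 then 1 else 0 :: nat)" for j
  define K where "K j = (\<Sum>i=1..j. if T i = 1 then 1 else 0 :: nat)" for j
  have "1 \<le> j \<Longrightarrow> j \<le> N \<Longrightarrow> R j + (if T j = 0 then 0 else 1) \<le> K j" for j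
  proof (induction j)
    case 0 then show ?case by simp
  next
    case (Suc j)
    show ?case
    proof (cases "j = 0")
      case True
      then show ?thesis using Ha H0 N1 by (force simp: R_def K_def)
    next
      case False
      then have IH: "R j + (if T j = 0 then 0 else 1) \<le> K j" using Suc by simp
      have RS: "R (Suc j) = R j + (if T j = 2 \<and> T (Suc j) \<noteq> 2 then 1 else 0)"
        using False by (simp add: R_def)
      have KS: "K (Suc j) = K j + (if T (Suc j) = 1 then 1 else 0)" by (simp add: K_def)
      have b: "T j = 0 \<longrightarrow> T (Suc j) \<noteq> 2" using Hb False Suc.prems by auto
      have t2: "T (Suc j) \<le> 2" using H0 Suc.prems by auto
      show ?thesis using IH RS KS b t2 by (auto split: if_splits)
    qed
  qed
  from this[of N] N1 Hc have "R N + 1 \<le> K N" by simp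
  moreover have "card {i\<in>{1..<N}. T i = 2 \<and> T (Suc i) \<noteq> 2} = R N"
    unfolding R_def by (rule card_filter_sum) simp
  moreover have "card {i\<in>{1..N}. T i = 1} = K N"
    unfolding K_def by (rule card_filter_sum) simp
  ultimately show ?thesis by simp
qed

lemma tseq_inj:
  fixes T T' :: "nat \<Rightarrow> nat" and N :: nat
  assumes H0: "\<forall>i\<in>{1..N}. T i \<le> 2" and H0': "\<forall>i\<in>{1..N}. T' i \<le> 2"
    and Hb: "\<forall>i. 1 \<le> i \<and> i < N \<and> T i = 0 \<longrightarrow> T (Suc i) \<noteq> 2"
    and Hb': "\<forall>i. 1 \<le> i \<and> i < N \<and> T' i = 0 \<longrightarrow> T' (Suc i) \<noteq> 2"
    and Hc: "T N \<noteq> 0" and Hc': "T' N \<noteq> 0"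
    and C: "\<forall>i\<in>{1..N}. T i = 1 \<longleftrightarrow> T' i = 1"
    and E: "\<forall>i\<in>{1..<N}. (T i = 2 \<and> T (Suc i) \<noteq> 2) \<longleftrightarrow> (T' i = 2 \<and> T' (Suc i) \<noteq> 2)"
  shows "\<forall>i\<in>{1..N}. T i = T' i"
proof -
  have "d < N \<Longrightarrow> T (N - d) = T' (N - d)" for d
  proof (induction d)
    case 0
    have "T N \<le> 2" "T' N \<le> 2" "T N = 1 \<longleftrightarrow> T' N = 1" using H0 H0' C 0 by auto
    then show ?case using Hc Hc' by simp arith
  next
    case (Suc d)
    define i where "i = N - Suc d"
    have i1: "1 \<le> i" "i < N" and si: "Suc i = N - d" using Suc.prems by (auto simp: i_def)
    have IH: "T (Suc i) = T' (Suc i)" using Suc si by simp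
    have t: "T i \<le> 2" "T' i \<le> 2" using H0 H0' i1 by auto
    have c: "T i = 1 \<longleftrightarrow> T' i = 1" using C i1 by auto
    have e: "(T i = 2 \<and> T (Suc i) \<noteq> 2) \<longleftrightarrow> (T' i = 2 \<and> T' (Suc i) \<noteq> 2)" using E i1 by auto
    have b: "T i = 0 \<longrightarrow> T (Suc i) \<noteq> 2" "T' i = 0 \<longrightarrow> T' (Suc i) \<noteq> 2" using Hb Hb' i1 by auto
    have "T i = T' i" using t c e b IH by (cases "T (Suc i) = 2") (auto simp: numeral_2_eq_2 le_Suc_eq)
    then show ?case by (simp add: i_def)
  qed
  show ?thesis
  proof
    fix i assume i: "i \<in> {1..N}"
    then have "N - i < N" "N - (N - i) = i" by auto
    with \<open>\<And>d. d < N \<Longrightarrow> T (N - d) = T' (N - d)\<close>[of "N - i"] show "T i = T' i" by simp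
  qed
qed



lemma card_small_subsets:
  assumes "finite A"
  shows "card {E. E \<subseteq> A \<and> card E \<le> j} \<le> (card A + 1) ^ j"
proof (induction j)
  case 0
  have "{E. E \<subseteq> A \<and> card E \<le> 0} = {{}}"
    using assms by (auto dest: finite_subset)
  then show ?case by simp
next
  case (Suc j)
  let ?F = "\<lambda>j. {E. E \<subseteq> A \<and> card E \<le> j}"
  have sub: "?F (Suc j) \<subseteq> insert {} (\<Union>x\<in>A. insert x ` ?F j)"
  proof
    fix E assume E: "E \<in> ?F (Suc j)"
    show "E \<in> insert {} (\<Union>x\<in>A. insert x ` ?F j)"
    proof (cases "E = {}")
      case False
      then obtain x where x: "x \<in> E" by auto
      have fE: "finite E" using E assms by (auto intro: finite_subset)
      have eq: "E = insert x (E - {x})" using x by auto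
      have mem: "E - {x} \<in> ?F j" using E x fE by auto
      have xA: "x \<in> A" using E x by auto
      have "E \<in> insert x ` ?F j" by (rule image_eqI[where f="insert x", OF eq mem])
      with xA have "E \<in> (\<Union>x\<in>A. insert x ` ?F j)" by (rule UN_I)
      then show ?thesis by (rule insertI2)
    qed simp
  qed
  have finF: "finite (?F j)" by (rule finite_subset[of _ "Pow A"]) (auto simp: assms)
  have "card (?F (Suc j)) \<le> card (insert {} (\<Union>x\<in>A. insert x ` ?F j))"
    by (rule card_mono[OF _ sub]) (simp add: finF assms)
  also have "\<dots> \<le> Suc (card (\<Union>x\<in>A. insert x ` ?F j))" by (rule card_insert_le_m1) simp_all
  also have "card (\<Union>x\<in>A. insert x ` ?F j) \<le> (\<Sum>x\<in>A. card (insert x ` ?F j))"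
    by (rule card_UN_le) (rule assms)
  also have "\<dots> \<le> (\<Sum>x\<in>A. card (?F j))"
    by (rule sum_mono) (rule card_image_le[OF finF])
  also have "\<dots> \<le> card A * (card A + 1) ^ j" using Suc by simp
  finally have "card (?F (Suc j)) \<le> Suc (card A * (card A + 1) ^ j)" by simp
  also have "\<dots> \<le> (card A + 1) ^ Suc j"
  proof -
    have "1 \<le> (card A + 1) ^ j" by simp
    then show ?thesis by simp
  qed
  finally show ?case .
qed

lemma tseq_count:
  fixes TT :: "(nat \<Rightarrow> nat) set" and N c :: nat
  assumes N1: "1 \<le> N"
    and H: "\<And>T. T \<in> TT \<Longrightarrow> (\<forall>i\<in>{1..N}. T i \<le> 2) \<and> T 1 \<noteq> 2 \<and>
        (\<forall>i. 1 \<le> i \<and> i < N \<and> T i = 0 \<longrightarrow> T (Suc i) \<noteq> 2) \<and> T N \<noteq> 0 \<and>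
        card {i\<in>{1..N}. T i = 1} = c \<and> (\<forall>i. i \<notin> {1..N} \<longrightarrow> T i = 0)"
  shows "card TT \<le> N ^ c * N ^ (c - 1)"
proof -
  define \<phi> where "\<phi> T = ({i\<in>{1..N}. T i = 1}, {i\<in>{1..<N}. T i = 2 \<and> T (Suc i) \<noteq> 2})"
    for T :: "nat \<Rightarrow> nat"
  have inj: "inj_on \<phi> TT"
  proof
    fix T T' assume T: "T \<in> TT" and T': "T' \<in> TT" and eq: "\<phi> T = \<phi> T'"
    have e1: "{i\<in>{1..N}. T i = 1} = {i\<in>{1..N}. T' i = 1}"
      and e2: "{i\<in>{1..<N}. T i = 2 \<and> T (Suc i) \<noteq> 2} = {i\<in>{1..<N}. T' i = 2 \<and> T' (Suc i) \<noteq> 2}"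
      using eq unfolding \<phi>_def by simp_all
    have c1: "\<forall>i\<in>{1..N}. T i = 1 \<longleftrightarrow> T' i = 1"
    proof
      fix i assume i: "i \<in> {1..N}"
      show "T i = 1 \<longleftrightarrow> T' i = 1" using e1[THEN eqset_imp_iff, of i] i by simp
    qed
    have c2: "\<forall>i\<in>{1..<N}. (T i = 2 \<and> T (Suc i) \<noteq> 2) \<longleftrightarrow> (T' i = 2 \<and> T' (Suc i) \<noteq> 2)"
    proof
      fix i assume i: "i \<in> {1..<N}"
      show "(T i = 2 \<and> T (Suc i) \<noteq> 2) \<longleftrightarrow> (T' i = 2 \<and> T' (Suc i) \<noteq> 2)"
        using e2[THEN eqset_imp_iff, of i] i by simp
    qed
    have HT: "(\<forall>i\<in>{1..N}. T i \<le> 2)" "(\<forall>i. 1 \<le> i \<and> i < N \<and> T i = 0 \<longrightarrow> T (Suc i) \<noteq> 2)"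
      "T N \<noteq> 0" "\<forall>i. i \<notin> {1..N} \<longrightarrow> T i = 0" using H[OF T] by blast+
    have HT': "(\<forall>i\<in>{1..N}. T' i \<le> 2)" "(\<forall>i. 1 \<le> i \<and> i < N \<and> T' i = 0 \<longrightarrow> T' (Suc i) \<noteq> 2)"
      "T' N \<noteq> 0" "\<forall>i. i \<notin> {1..N} \<longrightarrow> T' i = 0" using H[OF T'] by blast+
    have all: "\<forall>i\<in>{1..N}. T i = T' i"
      by (rule tseq_inj[OF HT(1) HT'(1) HT(2) HT'(2) HT(3) HT'(3) c1 c2])
    show "T = T'"
    proof
      fix i show "T i = T' i" using all HT(4) HT'(4) by (cases "i \<in> {1..N}") auto
    qed
  qed
  have img: "\<phi> ` TT \<subseteq> {C. C \<subseteq> {1..N} \<and> card C = c} \<times> {E. E \<subseteq> {1..<N} \<and> card E \<le> c - 1}"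
  proof
    fix p assume "p \<in> \<phi> ` TT"
    then obtain T where T: "T \<in> TT" and p: "p = \<phi> T" by auto
    have "card {i\<in>{1..<N}. T i = 2 \<and> T (Suc i) \<noteq> 2} + 1 \<le> card {i\<in>{1..N}. T i = 1}"
      using H[OF T] N1 by (intro tseq_runs) auto
    then show "p \<in> {C. C \<subseteq> {1..N} \<and> card C = c} \<times> {E. E \<subseteq> {1..<N} \<and> card E \<le> c - 1}"
      using H[OF T] p unfolding \<phi>_def by auto
  qed
  have "card TT = card (\<phi> ` TT)" using inj by (simp add: card_image)
  also have "\<dots> \<le> card ({C. C \<subseteq> {1..N} \<and> card C = c} \<times> {E. E \<subseteq> {1..<N} \<and> card E \<le> c - 1})"
    by (rule card_mono[OF _ img]) (auto intro: finite_cartesian_product)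
  also have "\<dots> = card {C. C \<subseteq> {1..N} \<and> card C = c} * card {E. E \<subseteq> {1..<N} \<and> card E \<le> c - 1}"
    by (rule card_cartesian_product)
  also have "\<dots> \<le> N ^ c * N ^ (c - 1)"
  proof (rule mult_le_mono)
    have "card {C. C \<subseteq> {1..N} \<and> card C = c} = N choose c" using n_subsets[of "{1..N}" c] by simp
    also have "\<dots> \<le> N ^ c"
      by (cases "c \<le> N") (auto intro: binomial_le_pow simp: binomial_eq_0)
    finally show "card {C. C \<subseteq> {1..N} \<and> card C = c} \<le> N ^ c" .
    have "card {E. E \<subseteq> {1..<N} \<and> card E \<le> c - 1} \<le> (card {1..<N} + 1) ^ (c - 1)"
      by (rule card_small_subsets) simp
    then show "card {E. E \<subseteq> {1..<N} \<and> card E \<le> c - 1} \<le> N ^ (c - 1)" using N1 by simp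
  qed
  finally show ?thesis .
qed

lemma prefix_count:
  fixes W :: "'a list set" and b :: "nat \<Rightarrow> nat"
  assumes fin: "finite W" and len: "\<forall>w\<in>W. length w = Suc L"
    and b0: "card ((\<lambda>w. take 1 w) ` W) \<le> b 0"
    and step: "\<And>j p. j < L \<Longrightarrow> p \<in> (\<lambda>w. take (Suc j) w) ` W \<Longrightarrow>
        card {x. p @ [x] \<in> (\<lambda>w. take (Suc (Suc j)) w) ` W} \<le> b (Suc j)"
  shows "card W \<le> (\<Prod>i\<le>L. b i)"
proof -
  have "j \<le> L \<Longrightarrow> card ((\<lambda>w. take (Suc j) w) ` W) \<le> (\<Prod>i\<le>j. b i)" for j
  proof (induction j)
    case 0 then show ?case using b0 by simp
  next
    case (Suc j)
    let ?P = "\<lambda>j. (\<lambda>w. take (Suc j) w) ` W"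
    let ?X = "\<lambda>p. {x. p @ [x] \<in> ?P (Suc j)}"
    have sub: "?P (Suc j) \<subseteq> (\<Union>p\<in>?P j. (\<lambda>x. p @ [x]) ` ?X p)"
    proof
      fix q assume "q \<in> ?P (Suc j)"
      then obtain w where w: "w \<in> W" and q: "q = take (Suc (Suc j)) w" by auto
      have lw: "Suc j < length w" using len w Suc.prems by auto
      have "q = take (Suc j) w @ [w ! Suc j]" using q lw by (simp add: take_Suc_conv_app_nth)
      then show "q \<in> (\<Union>p\<in>?P j. (\<lambda>x. p @ [x]) ` ?X p)"
        using w q by blast
    qed
    have finP: "finite (?P j)" using fin by simp
    have finX: "finite (?X p)" for p
    proof (rule finite_subset)
      show "?X p \<subseteq> last ` ?P (Suc j)"
      proof
        fix x assume "x \<in> ?X p"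
        then have "p @ [x] \<in> ?P (Suc j)" by simp
        then show "x \<in> last ` ?P (Suc j)" by (metis last_snoc imageI)
      qed
      show "finite (last ` ?P (Suc j))" using fin by simp
    qed
    have "card (?P (Suc j)) \<le> card (\<Union>p\<in>?P j. (\<lambda>x. p @ [x]) ` ?X p)"
      by (rule card_mono[OF _ sub]) (rule finite_UN_I[OF finP], rule finite_imageI[OF finX])
    also have "\<dots> \<le> (\<Sum>p\<in>?P j. card ((\<lambda>x. p @ [x]) ` ?X p))" by (rule card_UN_le[OF finP])
    also have "\<dots> = (\<Sum>p\<in>?P j. card (?X p))"
      by (rule sum.cong) (auto intro: card_image inj_onI)
    also have "\<dots> \<le> (\<Sum>p\<in>?P j. b (Suc j))"
      by (rule sum_mono) (rule step, use Suc.prems in auto)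
    also have "\<dots> = card (?P j) * b (Suc j)" by simp
    also have "\<dots> \<le> (\<Prod>i\<le>j. b i) * b (Suc j)" using Suc by simp
    finally show ?case by simp
  qed
  from this[of L] have "card ((\<lambda>w. take (Suc L) w) ` W) \<le> (\<Prod>i\<le>L. b i)" by simp
  moreover have "(\<lambda>w. take (Suc L) w) ` W = W"
  proof -
    have "\<And>w. w \<in> W \<Longrightarrow> take (Suc L) w = w" using len by simp
    then show ?thesis by (auto simp: image_iff)
  qed
  ultimately show ?thesis by simp
qed

lemma prod_if_pow: "finite I \<Longrightarrow> (\<Prod>i\<in>I. if P i then (x::nat) else 1) = x ^ card {i\<in>I. P i}"
  by (simp add: prod.inter_filter[symmetric])



definition tp :: "(nat + nat) list \<Rightarrow> nat \<Rightarrow> nat" where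
  "tp w i = (if free_step w i then 0 else if coinc_step w i then 1 else 2)"

definition tvec :: "nat \<Rightarrow> (nat + nat) list \<Rightarrow> nat \<Rightarrow> nat" where
  "tvec k w = (\<lambda>i. if i \<in> {1..2*k} then tp w i else 0)"

lemma card_filter_sum_int: "finite A \<Longrightarrow> int (card {x\<in>A. P x}) = (\<Sum>x\<in>A. if P x then 1 else 0)"
proof -
  assume fin: "finite A"
  have "int (card {x\<in>A. P x}) = int (\<Sum>x\<in>A. if P x then 1 else 0)" using card_filter_sum[OF fin] by simp
  also have "\<dots> = (\<Sum>x\<in>A. int (if P x then 1 else 0))" by (rule of_nat_sum)
  also have "\<dots> = (\<Sum>x\<in>A. if P x then 1 else 0)" by (rule sum.cong) auto
  finally show ?thesis .
qed

lemma cnb_len: "cnb_walk n m k w \<Longrightarrow> length w = Suc (2*k) \<and> 1 \<le> k"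
  by (simp add: cnb_walk_def)

lemma cnb_even: assumes "cnb_walk n m k w" "i \<le> 2*k" "even i" shows "w!i \<in> Inl ` {1..n}"
proof -
  obtain j where j: "i = 2*j" using assms(3) by auto
  then have "j \<le> k" using assms(2) by simp
  then obtain u where "u \<in> {1..n}" "w!(2*j) = Inl u" using assms(1) unfolding cnb_walk_def by blast
  then show ?thesis using j by auto
qed

lemma cnb_odd: assumes "cnb_walk n m k w" "i \<le> 2*k" "odd i" shows "w!i \<in> Inr ` {1..m}"
proof -
  obtain j where j: "i = 2*j+1" using assms(3) oddE by blast
  then have "j < k" using assms(2) by simp
  then obtain v where "v \<in> {1..m}" "w!(2*j+1) = Inr v" using assms(1) unfolding cnb_walk_def by blast
  then show ?thesis using j by auto
qed

lemma cnb_isl: "cnb_walk n m k w \<Longrightarrow> i \<le> 2*k \<Longrightarrow> isl (w!i) \<longleftrightarrow> even i"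
  using cnb_even[of n m k w i] cnb_odd[of n m k w i] by (cases "even i") auto

lemma cnb_nb: assumes "cnb_walk n m k w" "1 \<le> j" "j < 2*k" shows "w!(Suc j) \<noteq> w!(j-1)"
proof (cases "even j")
  case True
  then obtain i where i: "j = 2*i" by auto
  then have "i \<in> {1..k-1}" using assms by auto
  then have "w!(2*i+1) \<noteq> w!(2*i-1)" using assms(1) unfolding cnb_walk_def by blast
  then show ?thesis using i by simp
next
  case False
  then obtain i where i: "j = 2*i+1" using oddE by blast
  then have "Suc i \<in> {1..k}" using assms by auto
  then have "w!(2*Suc i) \<noteq> w!(2*Suc i-2)" using assms(1) unfolding cnb_walk_def by blast
  then show ?thesis using i by simp
qed

lemma cnb_close: "cnb_walk n m k w \<Longrightarrow> w!(2*k) = w!0" by (simp add: cnb_walk_def)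

lemma edges_before_mem: "e \<in> edges_before w i \<longleftrightarrow> (\<exists>j. 1 \<le> j \<and> j < i \<and> e = {w!(j-1), w!j})"
  by (auto simp: edges_before_def)

lemma nth_in_take: "j < i \<Longrightarrow> i \<le> length w \<Longrightarrow> w!j \<in> set (take i w)"
proof -
  assume a: "j < i" "i \<le> length w"
  then have "take i w ! j = w ! j" "j < length (take i w)" by auto
  then show ?thesis by (metis nth_mem)
qed

lemma forced_not_free: assumes "forced_step w i" "i \<le> length w" shows "\<not> free_step w i"
proof -
  obtain j where j: "1 \<le> j" "j < i" "{w!(i-1), w!i} = {w!(j-1), w!j}"
    using assms(1) unfolding forced_step_def edges_before_mem by blast
  have "w!i \<in> {w!(j-1), w!j}" using j(3) by blast
  moreover have "w!(j-1) \<in> set (take i w)" "w!j \<in> set (take i w)"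
    using j assms(2) by (auto intro: nth_in_take)
  ultimately show ?thesis unfolding free_step_def by auto
qed

lemma tp_le: "tp w i \<le> 2" by (simp add: tp_def)
lemma tp_0: "tp w i = 0 \<longleftrightarrow> free_step w i" by (simp add: tp_def)
lemma tp_1: "tp w i = 1 \<longleftrightarrow> coinc_step w i" by (auto simp: tp_def free_step_def coinc_step_def)
lemma tp_1': "tp w i = Suc 0 \<longleftrightarrow> coinc_step w i" using tp_1 by simp
lemma tp_2: "i \<le> length w \<Longrightarrow> tp w i = 2 \<longleftrightarrow> forced_step w i"
  using forced_not_free[of w i] by (auto simp: tp_def free_step_def coinc_step_def forced_step_def)

lemma not_forced_1: "\<not> forced_step w 1"
  by (simp add: forced_step_def edges_before_mem)

lemma free_then_not_forced:
  assumes w: "cnb_walk n m k w" and i: "1 \<le> i" "i < 2*k" and fr: "free_step w i"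
  shows "\<not> forced_step w (Suc i)"
proof
  assume "forced_step w (Suc i)"
  then obtain j where j: "1 \<le> j" "j < Suc i" "{w!i, w!(Suc i)} = {w!(j-1), w!j}"
    unfolding forced_step_def edges_before_mem by auto
  have lw: "length w = Suc (2*k)" using cnb_len[OF w] by simp
  have nin: "w!i \<notin> set (take i w)" using fr by (simp add: free_step_def)
  show False
  proof (cases "j < i")
    case True
    have "w!(j-1) \<in> set (take i w)" "w!j \<in> set (take i w)"
      using True j lw i by (auto intro: nth_in_take)
    moreover have "w!i \<in> {w!(j-1), w!j}" using j(3) by blast
    ultimately show False using nin by auto
  next
    case False
    then have ji: "j = i" using j by simp
    have "w!(i-1) \<in> set (take i w)" using i lw by (auto intro: nth_in_take)
    then have "w!(i-1) \<noteq> w!i" using nin by auto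
    then have "w!(Suc i) = w!(i-1)" using j(3) ji by (auto simp: doubleton_eq_iff)
    then show False using cnb_nb[OF w i] by simp
  qed
qed

lemma last_not_free: assumes w: "cnb_walk n m k w" shows "\<not> free_step w (2*k)"
proof -
  have lw: "length w = Suc (2*k)" "1 \<le> k" using cnb_len[OF w] by auto
  have "w!0 \<in> set (take (2*k) w)" using lw by (intro nth_in_take) auto
  then show ?thesis using cnb_close[OF w] by (simp add: free_step_def)
qed

lemma tvec_hyps:
  assumes w: "cnb_walk n m k w"
  shows "(\<forall>i\<in>{1..2*k}. tvec k w i \<le> 2) \<and> tvec k w 1 \<noteq> 2 \<and>
        (\<forall>i. 1 \<le> i \<and> i < 2*k \<and> tvec k w i = 0 \<longrightarrow> tvec k w (Suc i) \<noteq> 2) \<and> tvec k w (2*k) \<noteq> 0 \<and>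
        (\<forall>i. i \<notin> {1..2*k} \<longrightarrow> tvec k w i = 0)"
proof -
  have lw: "length w = Suc (2*k)" "1 \<le> k" using cnb_len[OF w] by auto
  have a: "tvec k w 1 \<noteq> 2" using not_forced_1[of w] tp_2[of 1 w] lw by (auto simp: tvec_def)
  have b: "\<forall>i. 1 \<le> i \<and> i < 2*k \<and> tvec k w i = 0 \<longrightarrow> tvec k w (Suc i) \<noteq> 2"
  proof (intro allI impI)
    fix i assume i: "1 \<le> i \<and> i < 2*k \<and> tvec k w i = 0"
    then have "free_step w i" by (auto simp: tvec_def tp_0)
    then have "\<not> forced_step w (Suc i)" using free_then_not_forced[OF w] i by auto
    then show "tvec k w (Suc i) \<noteq> 2" using tp_2[of "Suc i" w] lw i by (auto simp: tvec_def)
  qed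
  have c: "tvec k w (2*k) \<noteq> 0" using last_not_free[OF w] lw by (auto simp: tvec_def tp_0)
  show ?thesis using a b c by (auto simp: tvec_def tp_le)
qed

lemma steps_cnb: "cnb_walk n m k w \<Longrightarrow> steps w = {1..2*k}"
  using cnb_len[of n m k w] by (simp add: steps_def)

lemma coinc_count:
  assumes w: "cnb_walk n m k w"
  shows "int (card {i\<in>{1..2*k}. tvec k w i = 1}) = chi1 w + int (chi2 w) + 1"
proof -
  have "{i\<in>{1..2*k}. tvec k w i = 1} = {i\<in>steps w. coinc_step w i \<and> isl (w!i)} \<union> {i\<in>steps w. coinc_step w i \<and> \<not> isl (w!i)}"
    using steps_cnb[OF w] by (auto simp: tvec_def tp_1 tp_1')
  moreover have "card ({i\<in>steps w. coinc_step w i \<and> isl (w!i)} \<union> {i\<in>steps w. coinc_step w i \<and> \<not> isl (w!i)})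
     = card {i\<in>steps w. coinc_step w i \<and> isl (w!i)} + card {i\<in>steps w. coinc_step w i \<and> \<not> isl (w!i)}"
    by (rule card_Un_disjoint) (auto simp: steps_def)
  ultimately show ?thesis by (simp add: chi1_def chi2_def)
qed

lemma forced_count1:
  assumes w: "cnb_walk n m k w"
  shows "f1 w = card {i\<in>{1..2*k}. tvec k w i = 2 \<and> even i}"
proof -
  have lw: "length w = Suc (2*k)" using cnb_len[OF w] by simp
  show ?thesis unfolding f1_def steps_cnb[OF w]
    by (rule arg_cong[where f=card]) (use lw cnb_isl[OF w] in \<open>auto simp: tvec_def tp_2\<close>)
qed

lemma forced_count2:
  assumes w: "cnb_walk n m k w"
  shows "f2 w = card {i\<in>{1..2*k}. tvec k w i = 2 \<and> odd i}"
proof -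
  have lw: "length w = Suc (2*k)" using cnb_len[OF w] by simp
  show ?thesis unfolding f2_def steps_cnb[OF w]
    by (rule arg_cong[where f=card]) (use lw cnb_isl[OF w] in \<open>auto simp: tvec_def tp_2\<close>)
qed

lemma part2:
  assumes w: "cnb_walk n m k w"
  shows "\<bar>int (f1 w) - int (f2 w)\<bar> \<le> chi1 w + int (chi2 w) + 1"
proof -
  define T where "T = tvec k w"
  have H: "(\<forall>i\<in>{1..2*k}. T i \<le> 2)" "T 1 \<noteq> 2" "(\<forall>i. 1 \<le> i \<and> i < 2*k \<and> T i = 0 \<longrightarrow> T (Suc i) \<noteq> 2)"
    using tvec_hyps[OF w] unfolding T_def by blast+
  have bal: "\<bar>\<Sum>i=1..2*k. if T i = 2 then sg i else 0\<bar> \<le> (\<Sum>i=1..2*k. if T i = 1 then 1 else 0 :: int)"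
    by (rule tseq_balance[OF H])
  have "(\<Sum>i=1..2*k. if T i = 2 then sg i else 0) =
        (\<Sum>i=1..2*k. (if T i = 2 \<and> even i then 1 else 0) - (if T i = 2 \<and> odd i then 1 else 0 :: int))"
    by (rule sum.cong) (auto simp: sg_def)
  also have "\<dots> = int (card {i\<in>{1..2*k}. T i = 2 \<and> even i}) - int (card {i\<in>{1..2*k}. T i = 2 \<and> odd i})"
    unfolding sum_subtractf
    by (simp only: card_filter_sum_int[OF finite_atLeastAtMost])
  also have "\<dots> = int (f1 w) - int (f2 w)"
    unfolding forced_count1[OF w] forced_count2[OF w] T_def ..
  finally have e1: "(\<Sum>i=1..2*k. if T i = 2 then sg i else 0) = int (f1 w) - int (f2 w)" .
  have e2: "(\<Sum>i=1..2*k. if T i = 1 then 1 else 0 :: int) = chi1 w + int (chi2 w) + 1"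
    unfolding coinc_count[OF w, symmetric] T_def by (simp only: card_filter_sum_int[OF finite_atLeastAtMost])
  show ?thesis using bal e1 e2 by simp
qed



definition fac :: "nat \<Rightarrow> nat \<Rightarrow> nat \<Rightarrow> nat \<Rightarrow> nat \<Rightarrow> (nat \<Rightarrow> nat) \<Rightarrow> nat \<Rightarrow> nat" where
  "fac n m k d1 d2 T i = (if T i = 0 then (if even i then n else m) else if T i = 1 then 2*k
     else if even i then d2 - 1 else d1 - 1)"

lemma cnb_set: assumes w: "cnb_walk n m k w" shows "set w \<subseteq> Inl ` {1..n} \<union> Inr ` {1..m}"
proof
  fix x assume "x \<in> set w"
  then obtain i where i: "i < length w" "x = w!i" by (auto simp: in_set_conv_nth)
  then have "i \<le> 2*k" using cnb_len[OF w] by simp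
  then show "x \<in> Inl ` {1..n} \<union> Inr ` {1..m}" using cnb_even[OF w] cnb_odd[OF w] i by (cases "even i") auto
qed

lemma cnb_finite: "finite {w. cnb_walk n m k w}"
proof (rule finite_subset)
  show "{w. cnb_walk n m k w} \<subseteq> {xs. set xs \<subseteq> Inl ` {1..n} \<union> Inr ` {1..m} \<and> length xs = Suc (2*k)}"
    using cnb_set cnb_len by blast
  show "finite {xs. set xs \<subseteq> Inl ` {1..n} \<union> Inr ` {1..m} \<and> length xs = Suc (2*k)}"
    by (rule finite_lists_length_eq) simp
qed

lemma take_snoc_split: "i < length w \<Longrightarrow> take (Suc i) w = p @ [x] \<Longrightarrow> take i w = p \<and> w!i = x"
  by (simp add: take_Suc_conv_app_nth)

lemma eb_take: "i \<le> length w \<Longrightarrow> edges_before (take i w) i = edges_before w i"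
  unfolding edges_before_def
  by (rule Collect_cong) (metis (no_types, lifting) diff_le_self le_less_trans nth_take order.strict_trans1 less_imp_diff_less)

lemma eb_mono: "i \<le> i' \<Longrightarrow> edges_before w i \<subseteq> edges_before w i'"
  unfolding edges_before_def by auto

lemma nbr_finite: "finite {y. {a, y} \<in> edges_before w i}"
proof (rule finite_subset)
  show "{y. {a, y} \<in> edges_before w i} \<subseteq> \<Union>(edges_before w i)" by auto
  have "edges_before w i = (\<lambda>j. {w!(j-1), w!j}) ` {1..<i}" unfolding edges_before_def by auto
  then show "finite (\<Union>(edges_before w i))" by simp
qed

lemma fixedT_bound:
  fixes n m k d1 d2 :: nat and T :: "nat \<Rightarrow> nat"
  defines "W \<equiv> {w. cnb_walk n m k w \<and> deg_bounded d1 d2 w \<and> tvec k w = T}"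
  shows "card W \<le> (\<Prod>i\<le>2*k. fac n m k d1 d2 T i)"
proof (rule prefix_count)
  show finW: "finite W" unfolding W_def by (rule finite_subset[OF _ cnb_finite]) auto
  show "\<forall>w\<in>W. length w = Suc (2*k)" unfolding W_def using cnb_len by blast
  show "card ((\<lambda>w. take 1 w) ` W) \<le> fac n m k d1 d2 T 0"
  proof (cases "W = {}")
    case True then show ?thesis by simp
  next
    case False
    then obtain w1 where w1: "w1 \<in> W" by auto
    then have "tvec k w1 = T" by (simp add: W_def)
    moreover have "tvec k w1 0 = 0" by (simp add: tvec_def)
    ultimately have T0: "T 0 = 0" by simp
    have sub0: "(\<lambda>w. take 1 w) ` W \<subseteq> (\<lambda>u. [Inl u]) ` {1..n}"
    proof
      fix q assume "q \<in> (\<lambda>w. take 1 w) ` W"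
      then obtain w where w: "w \<in> W" "q = take 1 w" by auto
      have cw: "cnb_walk n m k w" using w unfolding W_def by simp
      have "w \<noteq> []" using cnb_len[OF cw] by auto
      then have "q = [w!0]" using w by (cases w) auto
      moreover have "w!0 \<in> Inl ` {1..n}" using cnb_even[OF cw, of 0] by simp
      ultimately show "q \<in> (\<lambda>u. [Inl u]) ` {1..n}" by auto
    qed
    have "card ((\<lambda>w. take 1 w) ` W) \<le> card ((\<lambda>u. [Inl u]) ` {1..n} :: (nat + nat) list set)" by (rule card_mono[OF _ sub0]) simp
    also have "\<dots> \<le> n" using card_image_le[of "{1..n}" "\<lambda>u. [Inl u]"] by simp
    also have "n = fac n m k d1 d2 T 0" using T0 by (simp add: fac_def)
    finally show ?thesis .
  qed
next
  fix j p assume j: "j < 2*k" and p: "p \<in> (\<lambda>w. take (Suc j) w) ` W"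
  define i where "i = Suc j"
  define X where "X = {x. p @ [x] \<in> (\<lambda>w. take (Suc (Suc j)) w) ` W}"
  obtain w0 where w0: "w0 \<in> W" "p = take i w0" using p i_def by auto
  have cw0: "cnb_walk n m k w0" "deg_bounded d1 d2 w0" "tvec k w0 = T" using w0 unfolding W_def by auto
  have lw0: "length w0 = Suc (2*k)" using cnb_len[OF cw0(1)] by simp
  have lp: "length p = i" using w0 lw0 j i_def by simp
  have i1: "i \<in> {1..2*k}" using j i_def by simp
  have Xw: "\<exists>w. cnb_walk n m k w \<and> tvec k w = T \<and> take i w = p \<and> w!i = x \<and> length w = Suc (2*k)" if "x \<in> X" for x
  proof -
    have "p @ [x] \<in> (\<lambda>w. take (Suc (Suc j)) w) ` W" using that by (simp add: X_def)
    then obtain w where w: "w \<in> W" "p @ [x] = take (Suc i) w" unfolding i_def by blast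
    have cw: "cnb_walk n m k w" "tvec k w = T" using w unfolding W_def by auto
    have lw: "length w = Suc (2*k)" using cnb_len[OF cw(1)] by simp
    have "take i w = p \<and> w!i = x" using take_snoc_split[of i w p x] w lw j i_def by simp
    then show ?thesis using cw lw by blast
  qed
  have Ti: "T i = tp w i" if "cnb_walk n m k w" "tvec k w = T" for w
    using that i1 unfolding tvec_def by auto
  consider "T i = 0" | "T i = 1" | "T i \<noteq> 0" "T i \<noteq> 1" by blast
  then have "card X \<le> fac n m k d1 d2 T i"
  proof cases
    case 1
    show ?thesis
    proof (cases "even i")
      case True
      have sub: "X \<subseteq> Inl ` {1..n}"
      proof
        fix x assume "x \<in> X"
        then obtain w where w: "cnb_walk n m k w" "take i w = p" "w!i = x" by (metis Xw)
        show "x \<in> Inl ` {1..n}" using cnb_even[OF w(1), of i] i1 True w by auto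
      qed
      have "card X \<le> card (Inl ` {1..n} :: (nat + nat) set)" by (rule card_mono[OF _ sub]) simp
      also have "\<dots> \<le> n" using card_image_le[of "{1..n}" Inl] by simp
      finally show ?thesis using 1 True by (simp add: fac_def)
    next
      case False
      have sub: "X \<subseteq> Inr ` {1..m}"
      proof
        fix x assume "x \<in> X"
        then obtain w where w: "cnb_walk n m k w" "take i w = p" "w!i = x" by (metis Xw)
        show "x \<in> Inr ` {1..m}" using cnb_odd[OF w(1), of i] i1 False w by auto
      qed
      have "card X \<le> card (Inr ` {1..m} :: (nat + nat) set)" by (rule card_mono[OF _ sub]) simp
      also have "\<dots> \<le> m" using card_image_le[of "{1..m}" Inr] by simp
      finally show ?thesis using 1 False by (simp add: fac_def)
    qed
  next
    case 2
    have sub: "X \<subseteq> set p"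
    proof
      fix x assume "x \<in> X"
      then obtain w where w: "cnb_walk n m k w" "tvec k w = T" "take i w = p" "w!i = x" by (metis Xw)
      have "tp w i = 1" using Ti[OF w(1,2)] 2 by simp
      then have "coinc_step w i" by (simp only: tp_1)
      then show "x \<in> set p" using w by (simp add: coinc_step_def)
    qed
    have "card X \<le> card (set p)" by (rule card_mono[OF _ sub]) simp
    also have "\<dots> \<le> length p" by (rule card_length)
    finally show ?thesis using 2 lp i1 by (simp add: fac_def)
  next
    case 3
    have T2: "T i = 2" using Ti[OF cw0(1,3)] tp_le[of w0 i] 3 by simp
    have "i \<noteq> 1" using T2 tvec_hyps[OF cw0(1)] cw0(3) by auto
    then have j1: "1 \<le> j" using i_def by simp
    define A where "A = {y. {p!j, y} \<in> edges_before p i}"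
    have finA: "finite A" unfolding A_def by (rule nbr_finite)
    have pj: "p!j = w0!j" "p!(j-1) = w0!(j-1)" using w0(2) i_def by auto
    have ebp: "edges_before p i = edges_before w0 i" using w0(2) eb_take[of i w0] lw0 i1 by simp
    have "A \<subseteq> {y. {w0!j, y} \<in> walk_edges w0}"
      unfolding A_def walk_edges_def using eb_mono[of i "length w0" w0] ebp pj lw0 i1 by auto
    moreover have "finite {y. {w0!j, y} \<in> walk_edges w0}" unfolding walk_edges_def by (rule nbr_finite)
    ultimately have "card A \<le> walk_deg w0 (w0!j)" unfolding walk_deg_def by (rule card_mono[rotated])
    also have "\<dots> \<le> (if even i then d2 else d1)"
    proof -
      have mem: "w0!j \<in> set w0" using lw0 j by simp
      have "isl (w0!j) \<longleftrightarrow> even j" using cnb_isl[OF cw0(1)] j by simp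
      then show ?thesis using cw0(2) mem unfolding deg_bounded_def i_def by auto
    qed
    finally have cA: "card A \<le> (if even i then d2 else d1)" .
    have bk: "p!(j-1) \<in> A"
    proof -
      have "{p!(j-1), p!j} \<in> edges_before p i" unfolding edges_before_mem using j1 i_def
        by (intro exI[of _ j]) simp
      then show ?thesis unfolding A_def by (simp add: insert_commute)
    qed
    have sub: "X \<subseteq> A - {p!(j-1)}"
    proof
      fix x assume "x \<in> X"
      then obtain w where w: "cnb_walk n m k w" "tvec k w = T" "take i w = p" "w!i = x" "length w = Suc (2*k)" by (metis Xw)
      have "forced_step w i" using Ti[OF w(1,2)] T2 tp_2[of i w] w(5) i1 by simp
      then have "{w!j, x} \<in> edges_before w i" using w i_def by (simp add: forced_step_def)
      moreover have "edges_before p i = edges_before w i" using w(3) eb_take[of i w] w(5) i1 by auto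
      moreover have "p!j = w!j" "p!(j-1) = w!(j-1)" using w(3) i_def by auto
      moreover have "x \<noteq> w!(j-1)" using cnb_nb[OF w(1) j1 j] w(4) i_def by simp
      ultimately show "x \<in> A - {p!(j-1)}" unfolding A_def by auto
    qed
    have "card X \<le> card (A - {p!(j-1)})" by (rule card_mono[OF _ sub]) (simp add: finA)
    also have "\<dots> = card A - 1" using bk finA by simp
    finally show ?thesis using cA 3 by (auto simp: fac_def split: if_splits)
  qed
  then show "card {x. p @ [x] \<in> (\<lambda>w. take (Suc (Suc j)) w) ` W} \<le> fac n m k d1 d2 T (Suc j)"
    unfolding X_def i_def .
qed



lemma prod_fac:
  assumes "finite I"
  shows "(\<Prod>i\<in>I. fac n m k d1 d2 T i) =
     n ^ card {i\<in>I. T i = 0 \<and> even i} * m ^ card {i\<in>I. T i = 0 \<and> odd i} * (2*k) ^ card {i\<in>I. T i = 1}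
     * (d2 - 1) ^ card {i\<in>I. T i \<noteq> 0 \<and> T i \<noteq> 1 \<and> even i} * (d1 - 1) ^ card {i\<in>I. T i \<noteq> 0 \<and> T i \<noteq> 1 \<and> odd i}"
proof -
  have pt: "fac n m k d1 d2 T i = (if T i = 0 \<and> even i then n else 1) * (if T i = 0 \<and> odd i then m else 1)
      * (if T i = 1 then 2*k else 1) * (if T i \<noteq> 0 \<and> T i \<noteq> 1 \<and> even i then d2 - 1 else 1)
      * (if T i \<noteq> 0 \<and> T i \<noteq> 1 \<and> odd i then d1 - 1 else 1)" for i
    by (simp add: fac_def)
  show ?thesis unfolding pt prod.distrib using assms by (simp add: prod_if_pow)
qed

lemma card_evens: "card {i\<in>{..2*k}. even i} = Suc k"
proof -
  have "{i\<in>{..2*k}. even i} = (\<lambda>j. 2*j) ` {..k}" by (auto elim!: evenE)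
  moreover have "inj_on (\<lambda>j. 2*j) {..k}" by (auto intro: inj_onI)
  ultimately show ?thesis by (simp add: card_image)
qed

lemma card_odds: "card {i\<in>{..2*k}. odd i} = k"
proof -
  have "{i\<in>{..2*k}. odd i} = (\<lambda>j. 2*j+1) ` {..<k}"
  proof
    show "{i\<in>{..2*k}. odd i} \<subseteq> (\<lambda>j. 2*j+1) ` {..<k}"
    proof
      fix i assume "i \<in> {i\<in>{..2*k}. odd i}"
      then obtain j where "i = 2*j+1" "i \<le> 2*k" by (auto elim!: oddE)
      then show "i \<in> (\<lambda>j. 2*j+1) ` {..<k}" by auto
    qed
  qed auto
  moreover have "inj_on (\<lambda>j. 2*j+1) {..<k}" by (auto intro: inj_onI)
  ultimately show ?thesis by (simp add: card_image)
qed

lemma coinc_count1: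
  assumes w: "cnb_walk n m k w"
  shows "int (card {i\<in>{..2*k}. tvec k w i = 1 \<and> even i}) = chi1 w + 1"
proof -
  have "{i\<in>{..2*k}. tvec k w i = 1 \<and> even i} = {i\<in>steps w. coinc_step w i \<and> isl (w!i)}"
    using steps_cnb[OF w] cnb_isl[OF w] by (auto simp: tvec_def tp_1 tp_1')
  then show ?thesis by (simp add: chi1_def)
qed

lemma coinc_count2:
  assumes w: "cnb_walk n m k w"
  shows "card {i\<in>{..2*k}. tvec k w i = 1 \<and> odd i} = chi2 w"
proof -
  have "{i\<in>{..2*k}. tvec k w i = 1 \<and> odd i} = {i\<in>steps w. coinc_step w i \<and> \<not> isl (w!i)}"
    using steps_cnb[OF w] cnb_isl[OF w] by (auto simp: tvec_def tp_1 tp_1')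
  then show ?thesis by (simp add: chi2_def)
qed

lemma tp_cases3: "tp w i \<noteq> 0 \<Longrightarrow> tp w i \<noteq> 1 \<Longrightarrow> tp w i = 2"
  by (auto simp: tp_def split: if_splits)

lemma forced_count1':
  assumes w: "cnb_walk n m k w"
  shows "card {i\<in>{..2*k}. tvec k w i \<noteq> 0 \<and> tvec k w i \<noteq> 1 \<and> even i} = f1 w"
proof -
  have "{i\<in>{..2*k}. tvec k w i \<noteq> 0 \<and> tvec k w i \<noteq> 1 \<and> even i} = {i\<in>{1..2*k}. tvec k w i = 2 \<and> even i}"
    using tp_cases3[of w] by (auto simp: tvec_def)
  then show ?thesis using forced_count1[OF w] by simp
qed

lemma forced_count2':
  assumes w: "cnb_walk n m k w"
  shows "card {i\<in>{..2*k}. tvec k w i \<noteq> 0 \<and> tvec k w i \<noteq> 1 \<and> odd i} = f2 w"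
proof -
  have "{i\<in>{..2*k}. tvec k w i \<noteq> 0 \<and> tvec k w i \<noteq> 1 \<and> odd i} = {i\<in>{1..2*k}. tvec k w i = 2 \<and> odd i}"
    using tp_cases3[of w] by (auto simp: tvec_def)
  then show ?thesis using forced_count2[OF w] by simp
qed

lemma coinc_total:
  assumes w: "cnb_walk n m k w"
  shows "int (card {i\<in>{..2*k}. tvec k w i = 1}) = chi1 w + int (chi2 w) + 1"
proof -
  have "{i\<in>{..2*k}. tvec k w i = 1} = {i\<in>{1..2*k}. tvec k w i = 1}" by (auto simp: tvec_def)
  then show ?thesis using coinc_count[OF w] by simp
qed

lemma free_count1:
  assumes w: "cnb_walk n m k w"
  shows "int (card {i\<in>{..2*k}. tvec k w i = 0 \<and> even i}) = int k - chi1 w - int (f1 w)"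
proof -
  let ?T = "tvec k w"
  have "int (Suc k) = (\<Sum>i\<in>{..2*k}. if even i then 1 else 0)"
    using card_evens[of k] card_filter_sum_int[of "{..2*k}" even] by simp
  also have "\<dots> = (\<Sum>i\<in>{..2*k}. (if ?T i = 0 \<and> even i then 1 else 0) + (if ?T i = 1 \<and> even i then 1 else 0)
       + (if ?T i \<noteq> 0 \<and> ?T i \<noteq> 1 \<and> even i then 1 else 0 :: int))"
    by (rule sum.cong) auto
  also have "\<dots> = int (card {i\<in>{..2*k}. ?T i = 0 \<and> even i}) + int (card {i\<in>{..2*k}. ?T i = 1 \<and> even i})
       + int (card {i\<in>{..2*k}. ?T i \<noteq> 0 \<and> ?T i \<noteq> 1 \<and> even i})"
    unfolding sum.distrib by (simp only: card_filter_sum_int[OF finite_atMost])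
  finally show ?thesis using coinc_count1[OF w] forced_count1'[OF w] by simp
qed

lemma free_count2:
  assumes w: "cnb_walk n m k w"
  shows "int (card {i\<in>{..2*k}. tvec k w i = 0 \<and> odd i}) = int k - int (chi2 w) - int (f2 w)"
proof -
  let ?T = "tvec k w"
  have "int k = (\<Sum>i\<in>{..2*k}. if odd i then 1 else 0)"
    using card_odds[of k] card_filter_sum_int[of "{..2*k}" odd] by simp
  also have "\<dots> = (\<Sum>i\<in>{..2*k}. (if ?T i = 0 \<and> odd i then 1 else 0) + (if ?T i = 1 \<and> odd i then 1 else 0)
       + (if ?T i \<noteq> 0 \<and> ?T i \<noteq> 1 \<and> odd i then 1 else 0 :: int))"
    by (rule sum.cong) auto
  also have "\<dots> = int (card {i\<in>{..2*k}. ?T i = 0 \<and> odd i}) + int (card {i\<in>{..2*k}. ?T i = 1 \<and> odd i})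
       + int (card {i\<in>{..2*k}. ?T i \<noteq> 0 \<and> ?T i \<noteq> 1 \<and> odd i})"
    unfolding sum.distrib by (simp only: card_filter_sum_int[OF finite_atMost])
  finally show ?thesis using coinc_count2[OF w] forced_count2'[OF w] by simp
qed



lemma part1:
  fixes n m k d1 d2 :: nat and c1 :: int and c2 g1 g2 :: nat
  assumes cpos: "c1 + int c2 \<ge> 1"
  shows "real (card {w. cnb_walk n m k w \<and> deg_bounded d1 d2 w \<and>
                          chi1 w = c1 \<and> chi2 w = c2 \<and> f1 w = g1 \<and> f2 w = g2})
           \<le> (2 * real k) powi (3 * (c1 + int c2) + 2) * real (d1 - 1) ^ g2 * real (d2 - 1) ^ g1
              * real n powi (int k - c1 - int g1) * real m powi (int k - int c2 - int g2)"
proof -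
  define S where "S = {w. cnb_walk n m k w \<and> deg_bounded d1 d2 w \<and>
                          chi1 w = c1 \<and> chi2 w = c2 \<and> f1 w = g1 \<and> f2 w = g2}"
  show ?thesis
  proof (cases "S = {}")
    case True
    then show ?thesis unfolding S_def[symmetric] by simp
  next
    case False
    then obtain w0 where w0: "w0 \<in> S" by auto
    have cw0: "cnb_walk n m k w0" and ch0: "chi1 w0 = c1" "chi2 w0 = c2" "f1 w0 = g1" "f2 w0 = g2"
      using w0 by (auto simp: S_def)
    define c where "c = nat (c1 + int c2 + 1)"
    have c_int: "int c = c1 + int c2 + 1" using cpos by (simp add: c_def)
    define a where "a = nat (int k - c1 - int g1)"
    define b where "b = nat (int k - int c2 - int g2)"
    have "int k - c1 - int g1 \<ge> 0"
      using free_count1[OF cw0] ch0 by linarith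
    then have a_int: "int a = int k - c1 - int g1" unfolding a_def by simp
    have "int k - int c2 - int g2 \<ge> 0"
      using free_count2[OF cw0] ch0 by linarith
    then have b_int: "int b = int k - int c2 - int g2" unfolding b_def by simp
    have k1: "1 \<le> k" using cnb_len[OF cw0] by simp
    define B where "B = n ^ a * m ^ b * (2*k) ^ c * (d2 - 1) ^ g1 * (d1 - 1) ^ g2"
    have finS: "finite S" unfolding S_def by (rule finite_subset[OF _ cnb_finite]) auto
    define TT where "TT = tvec k ` S"
    have cardTT: "card TT \<le> (2*k) ^ c * (2*k) ^ (c - 1)"
    proof (rule tseq_count)
      show "1 \<le> 2*k" using k1 by simp
    next
      fix T assume "T \<in> TT"
      then obtain w where w: "w \<in> S" "T = tvec k w" by (auto simp: TT_def)
      have cw: "cnb_walk n m k w" "chi1 w = c1" "chi2 w = c2" using w by (auto simp: S_def)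
      have "int (card {i\<in>{1..2*k}. T i = 1}) = int c" using coinc_count[OF cw(1)] cw c_int w by simp
      then have "card {i\<in>{1..2*k}. T i = 1} = c" by simp
      then show "(\<forall>i\<in>{1..2*k}. T i \<le> 2) \<and> T 1 \<noteq> 2 \<and>
        (\<forall>i. 1 \<le> i \<and> i < 2*k \<and> T i = 0 \<longrightarrow> T (Suc i) \<noteq> 2) \<and> T (2*k) \<noteq> 0 \<and>
        card {i\<in>{1..2*k}. T i = 1} = c \<and> (\<forall>i. i \<notin> {1..2*k} \<longrightarrow> T i = 0)"
        using tvec_hyps[OF cw(1)] w by simp
    qed
    have cardT: "card {w\<in>S. tvec k w = T} \<le> B" if T: "T \<in> TT" for T
    proof -
      obtain w where w: "w \<in> S" "T = tvec k w" using T by (auto simp: TT_def)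
      have cw: "cnb_walk n m k w" "chi1 w = c1" "chi2 w = c2" "f1 w = g1" "f2 w = g2"
        using w by (auto simp: S_def)
      have "card {w\<in>S. tvec k w = T} \<le> card {w. cnb_walk n m k w \<and> deg_bounded d1 d2 w \<and> tvec k w = T}"
        by (rule card_mono) (auto simp: S_def intro: finite_subset[OF _ cnb_finite])
      also have "\<dots> \<le> (\<Prod>i\<le>2*k. fac n m k d1 d2 T i)" by (rule fixedT_bound)
      also have "\<dots> = B"
      proof -
        have e1: "card {i\<in>{..2*k}. T i = 0 \<and> even i} = a"
          using free_count1[OF cw(1)] cw a_int w by simp
        have e2: "card {i\<in>{..2*k}. T i = 0 \<and> odd i} = b"
          using free_count2[OF cw(1)] cw b_int w by simp
        have e3: "card {i\<in>{..2*k}. T i = 1} = c"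
          using coinc_total[OF cw(1)] cw c_int w by simp
        have e4: "card {i\<in>{..2*k}. T i \<noteq> 0 \<and> T i \<noteq> 1 \<and> even i} = g1"
          using forced_count1'[OF cw(1)] cw w by simp
        have e5: "card {i\<in>{..2*k}. T i \<noteq> 0 \<and> T i \<noteq> 1 \<and> odd i} = g2"
          using forced_count2'[OF cw(1)] cw w by simp
        show ?thesis unfolding prod_fac[OF finite_atMost] e1 e2 e3 e4 e5 B_def ..
      qed
      finally show ?thesis .
    qed
    have eqS: "S = (\<Union>T\<in>TT. {w\<in>S. tvec k w = T})" by (auto simp: TT_def)
    have finTT: "finite TT" unfolding TT_def using finS by (rule finite_imageI)
    have "card S = card (\<Union>T\<in>TT. {w\<in>S. tvec k w = T})" by (rule arg_cong[OF eqS])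
    also have "\<dots> \<le> (\<Sum>T\<in>TT. card {w\<in>S. tvec k w = T})"
      by (rule card_UN_le[OF finTT])
    also have "\<dots> \<le> (\<Sum>T\<in>TT. B)" by (rule sum_mono) (rule cardT)
    also have "\<dots> = card TT * B" by simp
    also have "\<dots> \<le> (2*k) ^ c * (2*k) ^ (c - 1) * B" using cardTT by simp
    finally have main: "card S \<le> (2*k) ^ c * (2*k) ^ (c - 1) * B" .
    have c2le: "2 \<le> c" using cpos c_int by simp
    have ex: "3 * (c1 + int c2) + 2 = int (c + (c - 1) + c)" using c_int c2le by simp
    have eqR: "real ((2*k) ^ c * (2*k) ^ (c - 1) * B) =
       (2 * real k) powi (3 * (c1 + int c2) + 2) * real (d1 - 1) ^ g2 * real (d2 - 1) ^ g1
              * real n powi (int k - c1 - int g1) * real m powi (int k - int c2 - int g2)"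
    proof -
      have "real ((2*k) ^ c * (2*k) ^ (c - 1) * B) =
         (2 * real k) ^ c * (2 * real k) ^ (c - 1) * (real n ^ a * real m ^ b * (2 * real k) ^ c * real (d2 - 1) ^ g1 * real (d1 - 1) ^ g2)"
        unfolding B_def by (simp only: of_nat_mult of_nat_power of_nat_numeral)
      also have "\<dots> = (2 * real k) powi int (c + (c - 1) + c) * real (d1 - 1) ^ g2 * real (d2 - 1) ^ g1
              * real n powi int a * real m powi int b"
        by (simp only: power_int_of_nat power_add mult_ac)
      finally show ?thesis unfolding ex a_int b_int .
    qed
    have "real (card S) \<le> real ((2*k) ^ c * (2*k) ^ (c - 1) * B)" using main by (simp only: of_nat_le_iff)
    from this eqR have "real (card S) \<le> (2 * real k) powi (3 * (c1 + int c2) + 2) * real (d1 - 1) ^ g2 * real (d2 - 1) ^ g1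
              * real n powi (int k - c1 - int g1) * real m powi (int k - int c2 - int g2)"
      by (rule ord_le_eq_trans)
    then show ?thesis by (simp only: S_def)
  qed
qed

theorem lemma2p14:
  fixes n m k d1 d2 :: nat
  shows "(\<forall>(c1::int) (c2::nat) (g1::nat) (g2::nat). c1 + int c2 \<ge> 1 \<longrightarrow>
           real (card {w. cnb_walk n m k w \<and> deg_bounded d1 d2 w \<and>
                          chi1 w = c1 \<and> chi2 w = c2 \<and> f1 w = g1 \<and> f2 w = g2})
           \<le> (2 * real k) powi (3 * (c1 + int c2) + 2) * real (d1 - 1) ^ g2 * real (d2 - 1) ^ g1
              * real n powi (int k - c1 - int g1) * real m powi (int k - int c2 - int g2))
       \<and> (\<forall>w. cnb_walk n m k w \<and> deg_bounded d1 d2 w \<longrightarrow>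
              \<bar>int (f1 w) - int (f2 w)\<bar> \<le> chi1 w + int (chi2 w) + 1)"
  using part1 part2 by blast

end
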